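(* Let $k\ge 1$ be an integer and $p\in[0,1]$. Let $I_1,\dots,I_k$ be independent random variables with $P(I_j=1)=p$, $P(I_j=0)=1-p$. Let $P@i=\frac1i\sum_{j=1}^i I_j$ and $AP@k=\frac1k\sum_{i=1}^k P@i\cdot I_i$. Then $$\operatorname{Var}(AP@k)=\frac5k\,p^3(1-p)+\frac{1}{k^2}\,p(1-p)\Big[p(1-2p)\big(3H_k+H_k^2\big)+(1-p)(1-3p)H_k^{(2)}\Big],$$ where $H_k=\sum_{i=1}^k\frac1i$ and $H_k^{(2)}=\sum_{i=1}^k\frac1{i^2}$.
   Context: This is the online evaluation model: each of the top-$k$ recommended items is relevant independently with probability $p$ ($I_j=1$ iff the item at position $j$ is relevant). *)

theory Defs
  imports "HOL-Probability.Probability"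
begin

definition prec_at :: "(nat \<Rightarrow> 'a \<Rightarrow> real) \<Rightarrow> nat \<Rightarrow> 'a \<Rightarrow> real" where
  "prec_at I i x = (1 / real i) * (\<Sum>j=1..i. I j x)"

definition avg_prec :: "(nat \<Rightarrow> 'a \<Rightarrow> real) \<Rightarrow> nat \<Rightarrow> 'a \<Rightarrow> real" where
  "avg_prec I k x = (1 / real k) * (\<Sum>i=1..k. prec_at I i x * I i x)"

definition harm2 :: "nat \<Rightarrow> real" where
  "harm2 k = (\<Sum>i=1..k. 1 / (real i)^2)"

end

theory Submission imports Defs begin

definition Sf :: "nat \<Rightarrow> (nat \<Rightarrow> real) \<Rightarrow> real" where
  "Sf m w = (\<Sum>j=1..m. w j)"
definition Tf :: "nat \<Rightarrow> (nat \<Rightarrow> real) \<Rightarrow> real" where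
  "Tf m w = (\<Sum>i=1..m. Sf i w * w i / real i)"

lemma Sf_Suc: "Sf (Suc m) w = Sf m w + w (Suc m)" by (simp add: Sf_def)
lemma Tf_Suc: "Tf (Suc m) w = Tf m w + Sf (Suc m) w * w (Suc m) / real (Suc m)" by (simp add: Tf_def)

lemma Sf_restrict: "n < m \<Longrightarrow> Sf n (restrict w {1..<m}) = Sf n w"
  unfolding Sf_def by (intro sum.cong) auto
lemma Tf_restrict: "n < m \<Longrightarrow> Tf n (restrict w {1..<m}) = Tf n w"
  unfolding Tf_def using Sf_restrict[of _ m w] by (intro sum.cong) auto

lemma Sf_meas: "n < m \<Longrightarrow> Sf n \<in> borel_measurable (PiM {1..<m} (\<lambda>_. borel))"
  unfolding Sf_def by (intro borel_measurable_sum measurable_component_singleton) auto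
lemma Tf_meas: "n < m \<Longrightarrow> Tf n \<in> borel_measurable (PiM {1..<m} (\<lambda>_. borel))"
  unfolding Tf_def
  by (intro borel_measurable_sum borel_measurable_divide borel_measurable_times Sf_meas measurable_component_singleton) auto

definition lin :: "real \<Rightarrow> real \<Rightarrow> real \<Rightarrow> real \<Rightarrow> real \<Rightarrow> real \<Rightarrow> real \<Rightarrow> real \<Rightarrow> real" where
  "lin b0 b1 b2 b3 b4 b5 s t = b0 + b1 * s + b2 * s^2 + b3 * t + b4 * (t * s) + b5 * t^2"

definition ca :: "nat \<Rightarrow> real \<Rightarrow> real" where "ca n p = real n * p"
definition cb :: "nat \<Rightarrow> real \<Rightarrow> real" where "cb n p = real n * p * (1-p) + (real n)^2 * p^2"
definition cc :: "nat \<Rightarrow> real \<Rightarrow> real" where "cc n p = real n * p^2 + p * (1-p) * harm n"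
definition cd :: "nat \<Rightarrow> real \<Rightarrow> real" where
  "cd n p = harm n * (p + (real n - 3) * p^2 - (real n - 2) * p^3) + real n * (2 * p^2 + (real n - 2) * p^3)"
definition cV :: "nat \<Rightarrow> real \<Rightarrow> real" where
  "cV n p = 5 * real n * p^3 * (1-p) + p * (1-p) * (p * (1 - 2*p) * (3 * harm n + (harm n)^2) + (1-p) * (1 - 3*p) * harm2 n)"
definition ce :: "nat \<Rightarrow> real \<Rightarrow> real" where "ce n p = cV n p + (cc n p)^2"

lemma harm2_Suc: "harm2 (Suc n) = harm2 n + 1 / (real (Suc n))^2"
  by (simp add: harm2_def)

lemma harmS: "(harm (Suc n) :: real) = harm n + 1 / real (Suc n)"
  by (simp add: harm_Suc field_simps)

lemma ca_Suc: "ca (Suc n) p = ca n p + p" by (simp add: ca_def algebra_simps)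
lemma cb_Suc: "cb (Suc n) p = cb n p + p * (1 + 2 * ca n p)"
  by (simp add: cb_def ca_def algebra_simps power2_eq_square)
lemma cc_Suc: "cc (Suc n) p = cc n p + p * (1/real (Suc n) + ca n p / real (Suc n))"
proof -
  define m where "m = real (Suc n)"
  have m0: "m \<noteq> 0" and xn: "real n = m - 1" by (simp_all add: m_def)
  show ?thesis unfolding cc_def ca_def harmS m_def[symmetric] xn
    using m0 by (simp add: field_simps power2_eq_square power3_eq_cube)
qed
lemma cd_Suc: "cd (Suc n) p = cd n p + p * (1/real (Suc n) + 2 * ca n p / real (Suc n) + cb n p / real (Suc n) + cc n p)"
proof -
  define m where "m = real (Suc n)"
  have m0: "m \<noteq> 0" and xn: "real n = m - 1" by (simp_all add: m_def)
  show ?thesis unfolding cd_def cb_def cc_def ca_def harmS m_def[symmetric] xn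
    using m0 by (simp add: field_simps power2_eq_square power3_eq_cube)
qed
lemma ce_Suc: "ce (Suc n) p = ce n p + p * (1/(real (Suc n))^2 + 2 * ca n p / (real (Suc n))^2 + cb n p / (real (Suc n))^2
   + 2 * cc n p / real (Suc n) + 2 * cd n p / real (Suc n))"
proof -
  define m where "m = real (Suc n)"
  have m0: "m \<noteq> 0" and xn: "real n = m - 1" by (simp_all add: m_def)
  show ?thesis unfolding ce_def cV_def cd_def cb_def cc_def ca_def harmS harm2_Suc m_def[symmetric] xn
    using m0 by (simp add: field_simps power2_eq_square power3_eq_cube)
qed

lemma pw:
  assumes w: "w (Suc n) = 0 \<or> w (Suc n) = 1"
  shows pw1: "Sf (Suc n) w = lin 0 1 0 0 0 0 (Sf n w) (Tf n w) + lin 1 0 0 0 0 0 (Sf n w) (Tf n w) * w (Suc n)"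
    and pw2: "(\<lambda>w. (Sf (Suc n) w)^2) w = lin 0 0 1 0 0 0 (Sf n w) (Tf n w) + lin 1 2 0 0 0 0 (Sf n w) (Tf n w) * w (Suc n)"
    and pw3: "Tf (Suc n) w = lin 0 0 0 1 0 0 (Sf n w) (Tf n w)
               + lin (1/real (Suc n)) (1/real (Suc n)) 0 0 0 0 (Sf n w) (Tf n w) * w (Suc n)"
    and pw4: "(\<lambda>w. Tf (Suc n) w * Sf (Suc n) w) w = lin 0 0 0 0 1 0 (Sf n w) (Tf n w)
               + lin (1/real (Suc n)) (2/real (Suc n)) (1/real (Suc n)) 1 0 0 (Sf n w) (Tf n w) * w (Suc n)"
    and pw5: "(\<lambda>w. (Tf (Suc n) w)^2) w = lin 0 0 0 0 0 1 (Sf n w) (Tf n w)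
               + lin (1/(real (Suc n))^2) (2/(real (Suc n))^2) (1/(real (Suc n))^2) (2/real (Suc n)) (2/real (Suc n)) 0
                   (Sf n w) (Tf n w) * w (Suc n)"
  using w by (auto simp: Sf_Suc Tf_Suc lin_def field_simps power2_eq_square simp del: of_nat_Suc)

lemma fin: assumes k1: "k \<ge> (1::nat)" shows "cV k p / (real k)^2 = 5 / real k * p^3 * (1 - p)
         + 1 / (real k)^2 * p * (1 - p) *
             (p * (1 - 2*p) * (3 * harm k + (harm k)^2) + (1 - p) * (1 - 3*p) * harm2 k)"
    using k1 by (simp add: cV_def field_simps power2_eq_square)

lemma stp:
  fixes ES ES2 ET ETS ET2 :: "nat \<Rightarrow> real" and mom :: "real \<Rightarrow> real \<Rightarrow> real \<Rightarrow> real \<Rightarrow> real \<Rightarrow> real \<Rightarrow> nat \<Rightarrow> real"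
  assumes mom_def: "\<And>b0 b1 b2 b3 b4 b5 n. mom b0 b1 b2 b3 b4 b5 n = b0 + b1 * ES n + b2 * ES2 n + b3 * ET n + b4 * ETS n + b5 * ET2 n"
  and IH: "ES n = ca n p" "ES2 n = cb n p" "ET n = cc n p" "ETS n = cd n p" "ET2 n = ce n p"
  and r1: "ES (Suc n) = mom 0 1 0 0 0 0 n + p * mom 1 0 0 0 0 0 n"
  and r2: "ES2 (Suc n) = mom 0 0 1 0 0 0 n + p * mom 1 2 0 0 0 0 n"
  and r3: "ET (Suc n) = mom 0 0 0 1 0 0 n + p * mom (1/real (Suc n)) (1/real (Suc n)) 0 0 0 0 n"
  and r4: "ETS (Suc n) = mom 0 0 0 0 1 0 n + p * mom (1/real (Suc n)) (2/real (Suc n)) (1/real (Suc n)) 1 0 0 n"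
  and r5: "ET2 (Suc n) = mom 0 0 0 0 0 1 n + p * mom (1/(real (Suc n))^2) (2/(real (Suc n))^2) (1/(real (Suc n))^2) (2/real (Suc n)) (2/real (Suc n)) 0 n"
  shows "ES (Suc n) = ca (Suc n) p \<and> ES2 (Suc n) = cb (Suc n) p \<and> ET (Suc n) = cc (Suc n) p \<and> ETS (Suc n) = cd (Suc n) p \<and> ET2 (Suc n) = ce (Suc n) p"
proof (intro conjI)
  show "ES (Suc n) = ca (Suc n) p" unfolding r1 mom_def IH ca_Suc by simp
  show "ES2 (Suc n) = cb (Suc n) p" unfolding r2 mom_def IH cb_Suc by simp
  show "ET (Suc n) = cc (Suc n) p" unfolding r3 mom_def IH cc_Suc by (simp add: field_simps)
  show "ETS (Suc n) = cd (Suc n) p" unfolding r4 mom_def IH cd_Suc by (simp add: field_simps)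
  show "ET2 (Suc n) = ce (Suc n) p" unfolding r5 mom_def IH ce_Suc by (simp add: field_simps)
qed

locale apk = prob_space +
  fixes I :: "nat \<Rightarrow> 'a \<Rightarrow> real" and k :: nat and p :: real
  assumes k1: "k \<ge> 1" and p0: "0 \<le> p" and p1: "p \<le> 1"
   and ind: "indep_vars (\<lambda>_. borel) I {1..k}"
   and P1: "\<And>j. j \<in> {1..k} \<Longrightarrow> measure M {x \<in> space M. I j x = 1} = p"
   and P0: "\<And>j. j \<in> {1..k} \<Longrightarrow> measure M {x \<in> space M. I j x = 0} = 1 - p"
begin

definition J :: "nat \<Rightarrow> 'a \<Rightarrow> real" where
  "J i x = (if i \<in> {1..k} then indicator {1::real} (I i x) else 0)"

definition Jx :: "'a \<Rightarrow> nat \<Rightarrow> real" where "Jx x = (\<lambda>i. J i x)"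

lemma I_meas: "j \<in> {1..k} \<Longrightarrow> I j \<in> borel_measurable M"
  using ind unfolding indep_vars_def by auto

lemma ind1_meas: "(indicator {1::real} :: real \<Rightarrow> real) \<in> borel_measurable borel"
  by (rule borel_measurable_indicator) simp

lemma J_meas[measurable]: "J i \<in> borel_measurable M"
proof (cases "i \<in> {1..k}")
  case True
  have "(\<lambda>x. indicator {1::real} (I i x) :: real) \<in> borel_measurable M"
    by (rule measurable_compose[OF I_meas[OF True] ind1_meas])
  then show ?thesis unfolding J_def[abs_def] using True by simp
next
  case False
  then have "J i = (\<lambda>x. 0)" by (auto simp: J_def fun_eq_iff)
  then show ?thesis by simp
qed

lemma J01: "J i x = 0 \<or> J i x = 1" unfolding J_def by (auto simp: indicator_def)

lemma J_ind: "indep_vars (\<lambda>_. borel) J {1..k}"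
proof -
  have "indep_vars (\<lambda>_. borel) (\<lambda>i x. (\<lambda>i t. if i \<in> {1..k} then indicator {1::real} t else (0::real)) i (I i x)) {1..k}"
  proof (rule indep_vars_compose2[OF ind])
    fix i assume "i \<in> {1..k}"
    then show "(\<lambda>t. if i \<in> {1..k} then indicator {1::real} t else (0::real)) \<in> borel_measurable borel"
      using ind1_meas by simp
  qed
  then show ?thesis unfolding J_def[abs_def] by simp
qed

lemma EJ: "m \<in> {1..k} \<Longrightarrow> expectation (J m) = p"
proof -
  assume m: "m \<in> {1..k}"
  note [measurable] = I_meas[OF m]
  have "expectation (J m) = expectation (indicator {x \<in> space M. I m x = 1})"
    using m by (intro Bochner_Integration.integral_cong) (auto simp: J_def indicator_def)
  also have "\<dots> = p" using P1[OF m] by (simp add: Int_absorb2)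
  finally show ?thesis .
qed

lemma Jx_meas[measurable]: "(\<lambda>x. Jx x m) \<in> borel_measurable M"
  unfolding Jx_def by simp

lemma Sf_Jx_meas[measurable]: "(\<lambda>x. Sf n (Jx x)) \<in> borel_measurable M"
  unfolding Sf_def Jx_def by (intro borel_measurable_sum J_meas)
lemma Tf_Jx_meas[measurable]: "(\<lambda>x. Tf n (Jx x)) \<in> borel_measurable M"
  unfolding Tf_def Jx_def Sf_def
  by (intro borel_measurable_sum borel_measurable_divide borel_measurable_times J_meas borel_measurable_const)

definition W :: "(nat \<Rightarrow> real) set" where
  "W = {f. \<forall>x. (x \<in> {1..k} \<longrightarrow> f x \<in> {0,1}) \<and> (x \<notin> {1..k} \<longrightarrow> f x = 0)}"

lemma W_fin: "finite W" unfolding W_def by (rule finite_set_of_finite_funs) auto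
lemma Jx_W: "Jx x \<in> W" unfolding W_def Jx_def J_def by (auto simp: indicator_def)

lemma int_J: fixes G :: "(nat \<Rightarrow> real) \<Rightarrow> real" assumes "(\<lambda>x. G (Jx x)) \<in> borel_measurable M"
  shows "integrable M (\<lambda>x. G (Jx x))"
proof (rule integrable_const_bound[where B="Max ((\<lambda>w. norm (G w)) ` W)"])
  show "AE x in M. norm (G (Jx x)) \<le> Max ((\<lambda>w. norm (G w)) ` W)"
    using W_fin Jx_W by (intro AE_I2 Max_ge) auto
qed fact


lemma int_JJ: "integrable M (J m)"
  by (rule integrable_const_bound[where B=1]) (auto intro!: AE_I2 simp: J_def indicator_def)

lemma indep_G:
  assumes m: "m \<in> {1..k}" and G: "G \<in> borel_measurable (PiM {1..<m} (\<lambda>_. borel))"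
    and int: "integrable M (\<lambda>x. G (restrict (Jx x) {1..<m}))"
  shows "expectation (\<lambda>x. G (restrict (Jx x) {1..<m}) * J m x) = expectation (\<lambda>x. G (restrict (Jx x) {1..<m})) * p"
proof -
  have iv: "indep_var (PiM {1..<m} (\<lambda>_. borel)) (\<lambda>x. restrict (\<lambda>i. J i x) {1..<m}) (PiM {m} (\<lambda>_. borel)) (\<lambda>x. restrict (\<lambda>i. J i x) {m})"
    by (rule indep_var_restrict[OF J_ind]) (use m in auto)
  have "indep_var borel (G \<circ> (\<lambda>x. restrict (\<lambda>i. J i x) {1..<m})) borel ((\<lambda>f. f m) \<circ> (\<lambda>x. restrict (\<lambda>i. J i x) {m}))"
    by (rule indep_var_compose[OF iv G]) (rule measurable_component_singleton, simp)
  then have iv2: "indep_var borel (\<lambda>x. G (restrict (Jx x) {1..<m})) borel (J m)"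
    by (simp add: comp_def Jx_def)
  show ?thesis
    using indep_var_lebesgue_integral[OF iv2 int int_JJ] EJ[OF m] by simp
qed

definition ES where "ES n = expectation (\<lambda>x. Sf n (Jx x))"
definition ES2 where "ES2 n = expectation (\<lambda>x. (Sf n (Jx x))^2)"
definition ET where "ET n = expectation (\<lambda>x. Tf n (Jx x))"
definition ETS where "ETS n = expectation (\<lambda>x. Tf n (Jx x) * Sf n (Jx x))"
definition ET2 where "ET2 n = expectation (\<lambda>x. (Tf n (Jx x))^2)"

definition mom where "mom b0 b1 b2 b3 b4 b5 n = b0 + b1 * ES n + b2 * ES2 n + b3 * ET n + b4 * ETS n + b5 * ET2 n"

lemma int_S: "integrable M (\<lambda>x. Sf n (Jx x))" by (rule int_J) measurable
lemma int_S2: "integrable M (\<lambda>x. (Sf n (Jx x))^2)" by (rule int_J) measurable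
lemma int_T: "integrable M (\<lambda>x. Tf n (Jx x))" by (rule int_J) measurable
lemma int_TS: "integrable M (\<lambda>x. Tf n (Jx x) * Sf n (Jx x))" by (rule int_J) measurable
lemma int_T2: "integrable M (\<lambda>x. (Tf n (Jx x))^2)" by (rule int_J) measurable

lemma int_lin: "integrable M (\<lambda>x. lin b0 b1 b2 b3 b4 b5 (Sf n (Jx x)) (Tf n (Jx x)))"
  unfolding lin_def by (rule int_J) measurable

lemma E_lin: "expectation (\<lambda>x. lin b0 b1 b2 b3 b4 b5 (Sf n (Jx x)) (Tf n (Jx x))) = mom b0 b1 b2 b3 b4 b5 n"
  unfolding lin_def mom_def ES_def ES2_def ET_def ETS_def ET2_def
  by (simp add: int_S int_S2 int_T int_TS int_T2 prob_space)

lemma E_linJ: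
  assumes m: "m \<in> {1..k}"
  shows "expectation (\<lambda>x. lin a0 a1 a2 a3 a4 a5 (Sf (m-1) (Jx x)) (Tf (m-1) (Jx x))
      + lin b0 b1 b2 b3 b4 b5 (Sf (m-1) (Jx x)) (Tf (m-1) (Jx x)) * J m x)
    = mom a0 a1 a2 a3 a4 a5 (m-1) + p * mom b0 b1 b2 b3 b4 b5 (m-1)"
proof -
  define G where "G w = lin b0 b1 b2 b3 b4 b5 (Sf (m-1) w) (Tf (m-1) w)" for w
  have mm: "m - 1 < m" using m by auto
  have Gm: "G \<in> borel_measurable (PiM {1..<m} (\<lambda>_. borel))"
    unfolding G_def lin_def
    by (intro borel_measurable_add borel_measurable_times borel_measurable_power borel_measurable_const
        Sf_meas[OF mm] Tf_meas[OF mm])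
  have Gr: "G (restrict (Jx x) {1..<m}) = lin b0 b1 b2 b3 b4 b5 (Sf (m-1) (Jx x)) (Tf (m-1) (Jx x))" for x
    unfolding G_def using Sf_restrict[OF mm] Tf_restrict[OF mm] by simp
  have i1: "integrable M (\<lambda>x. G (restrict (Jx x) {1..<m}))"
    unfolding Gr by (rule int_lin)
  have e: "expectation (\<lambda>x. lin b0 b1 b2 b3 b4 b5 (Sf (m-1) (Jx x)) (Tf (m-1) (Jx x)) * J m x)
      = p * mom b0 b1 b2 b3 b4 b5 (m-1)"
  proof -
    from indep_G[OF m Gm i1] have "expectation (\<lambda>x. lin b0 b1 b2 b3 b4 b5 (Sf (m-1) (Jx x)) (Tf (m-1) (Jx x)) * J m x)
      = expectation (\<lambda>x. lin b0 b1 b2 b3 b4 b5 (Sf (m-1) (Jx x)) (Tf (m-1) (Jx x))) * p"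
      by (simp only: Gr)
    then show ?thesis using E_lin[of b0 b1 b2 b3 b4 b5 "m-1"] by (metis mult.commute)
  qed
  have i2: "integrable M (\<lambda>x. lin b0 b1 b2 b3 b4 b5 (Sf (m-1) (Jx x)) (Tf (m-1) (Jx x)) * J m x)"
  proof -
    have "integrable M (\<lambda>x. (\<lambda>w. lin b0 b1 b2 b3 b4 b5 (Sf (m-1) w) (Tf (m-1) w) * w m) (Jx x))"
      by (rule int_J) (unfold lin_def, measurable)
    then show ?thesis by (simp add: Jx_def)
  qed
  show ?thesis
    by (subst Bochner_Integration.integral_add[OF int_lin i2]) (simp only: E_lin e)
qed


lemma rec_gen:
  assumes n: "Suc n \<le> k"
    and F: "\<And>w. w (Suc n) = 0 \<or> w (Suc n) = 1 \<Longrightarrow>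
       F w = lin a0 a1 a2 a3 a4 a5 (Sf n w) (Tf n w) + lin b0 b1 b2 b3 b4 b5 (Sf n w) (Tf n w) * w (Suc n)"
  shows "expectation (\<lambda>x. F (Jx x)) = mom a0 a1 a2 a3 a4 a5 n + p * mom b0 b1 b2 b3 b4 b5 n"
proof -
  have mem: "Suc n \<in> {1..k}" using n by simp
  have eq: "(\<lambda>x. F (Jx x)) = (\<lambda>x. lin a0 a1 a2 a3 a4 a5 (Sf n (Jx x)) (Tf n (Jx x))
      + lin b0 b1 b2 b3 b4 b5 (Sf n (Jx x)) (Tf n (Jx x)) * J (Suc n) x)"
  proof (rule ext)
    fix x
    have "Jx x (Suc n) = 0 \<or> Jx x (Suc n) = 1" using J01 by (simp add: Jx_def)
    from F[of "Jx x", OF this] show "F (Jx x) = lin a0 a1 a2 a3 a4 a5 (Sf n (Jx x)) (Tf n (Jx x))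
      + lin b0 b1 b2 b3 b4 b5 (Sf n (Jx x)) (Tf n (Jx x)) * J (Suc n) x"
      by (simp add: Jx_def)
  qed
  show ?thesis unfolding eq
    by (rule E_linJ[OF mem, of a0 a1 a2 a3 a4 a5 b0 b1 b2 b3 b4 b5, unfolded diff_Suc_1])
qed

lemma closed: "n \<le> k \<Longrightarrow> ES n = ca n p \<and> ES2 n = cb n p \<and> ET n = cc n p \<and> ETS n = cd n p \<and> ET2 n = ce n p"
proof (induction n)
  case 0
  have "Sf 0 w = 0" "Tf 0 w = 0" for w by (simp_all add: Sf_def Tf_def)
  then show ?case
    by (simp add: ES_def ES2_def ET_def ETS_def ET2_def ca_def cb_def cc_def cd_def ce_def cV_def harm_def harm2_def)
next
  case (Suc n)
  then have IH: "ES n = ca n p" "ES2 n = cb n p" "ET n = cc n p" "ETS n = cd n p" "ET2 n = ce n p" by auto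
  have r1: "ES (Suc n) = mom 0 1 0 0 0 0 n + p * mom 1 0 0 0 0 0 n"
    unfolding ES_def by (rule rec_gen[OF Suc.prems pw1])
  have r2: "ES2 (Suc n) = mom 0 0 1 0 0 0 n + p * mom 1 2 0 0 0 0 n"
    unfolding ES2_def by (rule rec_gen[OF Suc.prems pw2])
  have r3: "ET (Suc n) = mom 0 0 0 1 0 0 n + p * mom (1/real (Suc n)) (1/real (Suc n)) 0 0 0 0 n"
    unfolding ET_def by (rule rec_gen[OF Suc.prems pw3])
  have r4: "ETS (Suc n) = mom 0 0 0 0 1 0 n + p * mom (1/real (Suc n)) (2/real (Suc n)) (1/real (Suc n)) 1 0 0 n"
    unfolding ETS_def by (rule rec_gen[OF Suc.prems pw4])
  have r5: "ET2 (Suc n) = mom 0 0 0 0 0 1 n + p * mom (1/(real (Suc n))^2) (2/(real (Suc n))^2) (1/(real (Suc n))^2) (2/real (Suc n)) (2/real (Suc n)) 0 n"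
    unfolding ET2_def by (rule rec_gen[OF Suc.prems pw5])
  show ?case by (rule stp[OF mom_def IH r1 r2 r3 r4 r5])
qed

lemma AEI: "AE x in M. \<forall>j\<in>{1..k}. I j x = J j x"
proof (rule AE_finite_allI)
  fix j assume j: "j \<in> {1..k}"
  note [measurable] = I_meas[OF j]
  let ?A = "{x \<in> space M. I j x = 1}" and ?B = "{x \<in> space M. I j x = 0}"
  have "prob (?A \<union> ?B) = prob ?A + prob ?B"
    by (rule finite_measure_Union) auto
  then have "prob (?A \<union> ?B) = 1" using P1[OF j] P0[OF j] by simp
  then have "AE x in M. x \<in> ?A \<union> ?B" by (rule AE_prob_1)
  then show "AE x in M. I j x = J j x"
    by (rule eventually_mono) (use j in \<open>auto simp: J_def indicator_def\<close>)
qed simp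

lemma ap_eq:
  assumes h: "\<forall>j\<in>{1..k}. I j x = J j x"
  shows "avg_prec I k x = Tf k (Jx x) / real k"
proof -
  have "(\<Sum>i=1..k. prec_at I i x * I i x) = (\<Sum>i=1..k. Sf i (Jx x) * Jx x i / real i)"
  proof (rule sum.cong[OF refl])
    fix i assume i: "i \<in> {1..k}"
    have "(\<Sum>j=1..i. I j x) = Sf i (Jx x)"
      unfolding Sf_def Jx_def using i h by (intro sum.cong) auto
    then show "prec_at I i x * I i x = Sf i (Jx x) * Jx x i / real i"
      unfolding prec_at_def using i h by (simp add: Jx_def)
  qed
  then show ?thesis unfolding avg_prec_def Tf_def by simp
qed

lemma ap_meas: "avg_prec I k \<in> borel_measurable M"
  unfolding avg_prec_def[abs_def] prec_at_def
  apply (intro borel_measurable_times borel_measurable_sum borel_measurable_const)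
  apply (auto intro!: I_meas)
  done

lemma main: "variance (avg_prec I k) =
           5 / real k * p^3 * (1 - p)
         + 1 / (real k)^2 * p * (1 - p) *
             (p * (1 - 2*p) * (3 * harm k + (harm k)^2) + (1 - p) * (1 - 3*p) * harm2 k)"
proof -
  have AE2: "AE x in M. avg_prec I k x = Tf k (Jx x) / real k"
    using AEI by (rule eventually_mono) (rule ap_eq)
  have E1: "expectation (avg_prec I k) = ET k / real k"
  proof -
    have "expectation (avg_prec I k) = expectation (\<lambda>x. Tf k (Jx x) / real k)"
      by (rule integral_cong_AE[OF ap_meas _ AE2]) (intro borel_measurable_divide Tf_Jx_meas borel_measurable_const)
    then show ?thesis by (simp add: ET_def)
  qed
  define c where "c = ET k"
  have "variance (avg_prec I k) = expectation (\<lambda>x. (Tf k (Jx x) / real k - c / real k)^2)"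
    unfolding E1 c_def
  proof (rule integral_cong_AE)
    show "(\<lambda>x. (avg_prec I k x - ET k / real k)\<^sup>2) \<in> borel_measurable M"
      by (intro borel_measurable_power borel_measurable_diff ap_meas borel_measurable_const)
    show "(\<lambda>x. (Tf k (Jx x) / real k - ET k / real k)\<^sup>2) \<in> borel_measurable M"
      by (intro borel_measurable_power borel_measurable_diff borel_measurable_divide Tf_Jx_meas borel_measurable_const)
    show "AE x in M. (avg_prec I k x - ET k / real k)\<^sup>2 = (Tf k (Jx x) / real k - ET k / real k)\<^sup>2"
      using AE2 by (rule eventually_mono) simp
  qed
  also have "\<dots> = expectation (\<lambda>x. lin (c^2/(real k)^2) 0 0 (-2*c/(real k)^2) 0 (1/(real k)^2) (Sf k (Jx x)) (Tf k (Jx x)))"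
    using k1 by (intro Bochner_Integration.integral_cong refl) (simp add: lin_def power2_eq_square field_simps)
  also have "\<dots> = mom (c^2/(real k)^2) 0 0 (-2*c/(real k)^2) 0 (1/(real k)^2) k" by (rule E_lin)
  also have "\<dots> = (ET2 k - (ET k)^2) / (real k)^2"
    unfolding mom_def c_def using k1 by (simp add: field_simps power2_eq_square)
  also have "\<dots> = cV k p / (real k)^2"
    using closed[of k] by (simp add: ce_def)
  also have "\<dots> = 5 / real k * p^3 * (1 - p)
         + 1 / (real k)^2 * p * (1 - p) *
             (p * (1 - 2*p) * (3 * harm k + (harm k)^2) + (1 - p) * (1 - 3*p) * harm2 k)"
    by (rule fin[OF k1])
  finally show ?thesis .
qed

end

theorem theorem4:
  fixes M :: "'a measure" and I :: "nat \<Rightarrow> 'a \<Rightarrow> real" and k :: nat and p :: real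
  assumes "prob_space M"
    and "k \<ge> 1"
    and "0 \<le> p" and "p \<le> 1"
    and "prob_space.indep_vars M (\<lambda>_. borel) I {1..k}"
    and "\<And>j. j \<in> {1..k} \<Longrightarrow> measure M {x \<in> space M. I j x = 1} = p"
    and "\<And>j. j \<in> {1..k} \<Longrightarrow> measure M {x \<in> space M. I j x = 0} = 1 - p"
  shows "prob_space.variance M (avg_prec I k) =
           5 / real k * p^3 * (1 - p)
         + 1 / (real k)^2 * p * (1 - p) *
             (p * (1 - 2*p) * (3 * harm k + (harm k)^2) + (1 - p) * (1 - 3*p) * harm2 k)"
proof -
  interpret apk M I k p
    by (rule apk.intro[OF assms(1)], unfold_locales) (use assms in auto)
  show ?thesis by (rule main)
qed

end
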